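(* Let $k\ge 1$, $d\ge 1$, $n\ge 1$ and $t\ge k$ be integers, and let $F_1,\dots,F_n\subset\mathbb{R}^d$ be sets of $t$ points each (regarded as colour classes). (i) If $n=(k-1)d+1$ and $t=k$, then there is a colourful $k$-partition $A_1,\dots,A_k$ of $F_1,\dots,F_n$ whose convex hulls intersect with equal coefficients. (ii) If $n<(k-1)d+1$, then for every value of $t$ the statement in (i) fails: there exist sets $F_1,\dots,F_n\subset\mathbb{R}^d$ of $t$ points each such that no colourful $k$-partition of them has convex hulls intersecting with equal coefficients.
   Context: A colourful set is a set containing exactly one point from each colour class $F_j$. A colourful $k$-partition of $F_1,\dots,F_n$ is a family of $k$ pairwise disjoint colourful sets $A_1,\dots,A_k$ (even if the classes have more than $k$ points). We write $A_i=\{x^i_j : x^i_j\in F_j,\ j=1,\dots,n\}$. The convex hulls of $A_1,\dots,A_k$ intersect with equal coefficients if there are real numbers $\alpha_1,\dots,\alpha_n\ge 0$ with $\sum_j\alpha_j=1$ such that the point $\sum_{j=1}^n\alpha_j x^i_j$ is the same for all $i=1,\dots,k$. *)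

theory Defs
  imports "HOL-Analysis.Analysis"
begin

text \<open>A colourful k-partition is given by points x i j (colourful set A_i = {x i j | j < n}),
with x i j in F j; the sets A_i are pairwise disjoint as sets of coloured points,
i.e. for each colour j the points x 0 j, ..., x (k-1) j are distinct.\<close>

definition colourful_partition ::
  "(nat \<Rightarrow> 'a set) \<Rightarrow> nat \<Rightarrow> nat \<Rightarrow> (nat \<Rightarrow> nat \<Rightarrow> 'a) \<Rightarrow> bool" where
  "colourful_partition F n k x \<longleftrightarrow>
     (\<forall>i<k. \<forall>j<n. x i j \<in> F j) \<and> (\<forall>j<n. inj_on (\<lambda>i. x i j) {..<k})"

definition intersect_equal_coeffs ::
  "nat \<Rightarrow> nat \<Rightarrow> (nat \<Rightarrow> nat \<Rightarrow> 'a::real_vector) \<Rightarrow> bool" where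
  "intersect_equal_coeffs n k x \<longleftrightarrow>
     (\<exists>\<alpha> :: nat \<Rightarrow> real. (\<forall>j<n. \<alpha> j \<ge> 0) \<and> (\<Sum>j<n. \<alpha> j) = 1 \<and>
        (\<forall>i<k. \<forall>i'<k. (\<Sum>j<n. \<alpha> j *\<^sub>R x i j) = (\<Sum>j<n. \<alpha> j *\<^sub>R x i' j)))"

end

theory Submission
  imports Defs
begin


lemma aux_lin:
  fixes a b :: real
  assumes "\<And>t. 0 < t \<Longrightarrow> t \<le> 1 \<Longrightarrow> 0 \<le> 2*a + t*b" and "b \<ge> 0"
  shows "a \<ge> 0"
proof (rule ccontr)
  assume "\<not> a \<ge> 0"
  hence a: "a < 0" by simp
  show False
  proof (cases "b = 0")
    case True then show ?thesis using assms(1)[of 1] a by simp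
  next
    case False
    hence bp: "b > 0" using assms(2) by simp
    define t where "t = min 1 (-a/b)"
    have t0: "0 < t" using a bp by (simp add: t_def divide_less_0_iff)
    have t1: "t \<le> 1" by (simp add: t_def)
    have "t * b \<le> -a" using bp by (simp add: t_def min_def field_simps split: if_splits)
    then show ?thesis using assms(1)[OF t0 t1] a by linarith
  qed
qed

lemma dep_lemma:
  fixes v :: "'a \<Rightarrow> nat \<Rightarrow> real"
  assumes "finite J" "card J > D"
  shows "\<exists>c. (\<exists>j\<in>J. c j \<noteq> 0) \<and> (\<forall>q<D. (\<Sum>j\<in>J. c j * v j q) = 0)"
  using assms
proof (induction D arbitrary: J v)
  case 0
  then obtain j where "j \<in> J" by (metis card.empty ex_in_conv less_irrefl)
  then show ?case by (intro exI[of _ "\<lambda>_. 1"]) auto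
next
  case (Suc D)
  show ?case
  proof (cases "\<forall>j\<in>J. v j D = 0")
    case True
    obtain c where c: "\<exists>j\<in>J. c j \<noteq> 0" "\<forall>q<D. (\<Sum>j\<in>J. c j * v j q) = 0"
      using Suc.IH[of J v] Suc.prems by auto
    show ?thesis
    proof (intro exI[of _ c] conjI allI impI)
      show "\<exists>j\<in>J. c j \<noteq> 0" by fact
      fix q assume "q < Suc D"
      then consider "q < D" | "q = D" by linarith
      then show "(\<Sum>j\<in>J. c j * v j q) = 0"
        by cases (use c True in auto)
    qed
  next
    case False
    then obtain j0 where j0: "j0 \<in> J" "v j0 D \<noteq> 0" by auto
    define J' where "J' = J - {j0}"
    have fJ': "finite J'" using Suc.prems by (simp add: J'_def)
    have cJ': "card J' > D" using Suc.prems j0 by (simp add: J'_def)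
    define u where "u j q = v j q - (v j D / v j0 D) * v j0 q" for j q
    obtain c' where c': "\<exists>j\<in>J'. c' j \<noteq> 0" "\<forall>q<D. (\<Sum>j\<in>J'. c' j * u j q) = 0"
      using Suc.IH[OF fJ' cJ', of u] by auto
    define c where "c j = (if j = j0 then - (\<Sum>i\<in>J'. c' i * v i D) / v j0 D else c' j)" for j
    have key: "(\<Sum>j\<in>J. c j * v j q) = (\<Sum>j\<in>J'. c' j * u j q)" for q
    proof -
      have "(\<Sum>j\<in>J. c j * v j q) = c j0 * v j0 q + (\<Sum>j\<in>J'. c j * v j q)"
        using Suc.prems(1) j0 unfolding J'_def by (simp add: sum.remove)
      also have "(\<Sum>j\<in>J'. c j * v j q) = (\<Sum>j\<in>J'. c' j * v j q)"
        by (rule sum.cong) (auto simp: c_def J'_def)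
      also have "(\<Sum>j\<in>J'. c' j * u j q) = (\<Sum>j\<in>J'. c' j * v j q) - (\<Sum>j\<in>J'. c' j * v j D) / v j0 D * v j0 q"
        by (simp add: u_def algebra_simps sum_subtractf sum_distrib_left sum_divide_distrib)
      ultimately show ?thesis by (simp add: c_def)
    qed
    show ?thesis
    proof (intro exI[of _ c] conjI allI impI)
      show "\<exists>j\<in>J. c j \<noteq> 0" using c' by (auto simp: c_def J'_def)
      fix q assume "q < Suc D"
      then consider "q < D" | "q = D" by linarith
      then show "(\<Sum>j\<in>J. c j * v j q) = 0"
      proof cases
        case 1 then show ?thesis using key c' by simp
      next
        case 2 then show ?thesis using key j0(2) by (simp add: u_def)
      qed
    qed
  qed
qed



lemma simplex_compact:
  "compact {\<alpha>::nat\<Rightarrow>real. (\<forall>j<n. 0 \<le> \<alpha> j) \<and> (\<forall>j\<ge>n. \<alpha> j = 0) \<and> (\<Sum>j<n. \<alpha> j) = 1}"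
proof -
  define C where "C = PiE UNIV (\<lambda>j. if j < n then {0..(1::real)} else {0})"
  have "compactin (product_topology (\<lambda>_. euclidean) UNIV) C"
    unfolding C_def by (subst compactin_PiE) auto
  hence cC: "compact C" by (simp add: euclidean_product_topology)
  have cl: "closed {\<alpha>::nat\<Rightarrow>real. (\<Sum>j<n. \<alpha> j) = 1}"
    by (intro closed_Collect_eq continuous_intros) auto
  have eq: "{\<alpha>::nat\<Rightarrow>real. (\<forall>j<n. 0 \<le> \<alpha> j) \<and> (\<forall>j\<ge>n. \<alpha> j = 0) \<and> (\<Sum>j<n. \<alpha> j) = 1}
      = C \<inter> {\<alpha>. (\<Sum>j<n. \<alpha> j) = 1}"
  proof (intro equalityI subsetI)
    fix \<alpha> assume a: "\<alpha> \<in> {\<alpha>::nat\<Rightarrow>real. (\<forall>j<n. 0 \<le> \<alpha> j) \<and> (\<forall>j\<ge>n. \<alpha> j = 0) \<and> (\<Sum>j<n. \<alpha> j) = 1}"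
    have "\<alpha> j \<le> 1" if "j < n" for j
    proof -
      have "\<alpha> j \<le> (\<Sum>i<n. \<alpha> i)"
        by (rule member_le_sum) (use a that in auto)
      then show ?thesis using a by simp
    qed
    then show "\<alpha> \<in> C \<inter> {\<alpha>. (\<Sum>j<n. \<alpha> j) = 1}" using a by (auto simp: C_def PiE_iff not_less)
  next
    fix \<alpha> assume "\<alpha> \<in> C \<inter> {\<alpha>. (\<Sum>j<n. \<alpha> j) = 1}"
    then show "\<alpha> \<in> {\<alpha>::nat\<Rightarrow>real. (\<forall>j<n. 0 \<le> \<alpha> j) \<and> (\<forall>j\<ge>n. \<alpha> j = 0) \<and> (\<Sum>j<n. \<alpha> j) = 1}"
      by (auto simp: C_def PiE_iff) (metis atLeastAtMost_iff not_le singletonD)+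
  qed
  show ?thesis unfolding eq by (rule compact_Int_closed[OF cC cl])
qed



lemma cont_coord [continuous_intros]: "continuous_on S (\<lambda>x::nat\<Rightarrow>real. x j)"
  by (rule continuous_on_subset[OF continuous_on_product_coordinates]) auto

lemma colourful_cara:
  fixes W :: "nat \<Rightarrow> nat \<Rightarrow> nat \<Rightarrow> real"
  assumes k: "k \<ge> 1" and nD: "n = D + 1"
    and zero: "\<And>j q. j < n \<Longrightarrow> q < D \<Longrightarrow> (\<Sum>s<k. W j s q) = 0"
  shows "\<exists>r \<alpha>. (\<forall>j<n. r j < k) \<and> (\<forall>j<n. \<alpha> j \<ge> 0) \<and> (\<Sum>j<n. \<alpha> j) = 1 \<and>
            (\<forall>q<D. (\<Sum>j<n. \<alpha> j * W j (r j) q) = 0)"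
proof -
  define S where "S = {\<alpha>::nat\<Rightarrow>real. (\<forall>j<n. 0 \<le> \<alpha> j) \<and> (\<forall>j\<ge>n. \<alpha> j = 0) \<and> (\<Sum>j<n. \<alpha> j) = 1}"
  define R where "R = PiE {..<n} (\<lambda>_. {..<k})"
  define cb where "cb r \<alpha> q = (\<Sum>j<n. \<alpha> j * W j (r j) q)" for r \<alpha> q
  define N where "N r \<alpha> = (\<Sum>q<D. (cb r \<alpha> q)^2)" for r \<alpha>
  define minim where "minim r \<alpha> \<longleftrightarrow> r \<in> R \<and> \<alpha> \<in> S \<and> (\<forall>r'\<in>R. \<forall>\<beta>\<in>S. N r \<alpha> \<le> N r' \<beta>)" for r \<alpha>
  have Sc: "compact S" using simplex_compact S_def by simp
  have n0: "n > 0" using nD by simp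
  have e0S: "(\<lambda>j::nat. if j = 0 then (1::real) else 0) \<in> S"
    using n0 by (auto simp: S_def)
  have cont: "continuous_on S (N r)" for r
    unfolding N_def cb_def by (intro continuous_intros)
  have "\<forall>r. \<exists>\<alpha>\<in>S. \<forall>\<beta>\<in>S. N r \<alpha> \<le> N r \<beta>"
    using continuous_attains_inf[OF Sc _ cont] e0S by blast
  then obtain ar where ar: "\<And>r. ar r \<in> S" "\<And>r \<beta>. \<beta> \<in> S \<Longrightarrow> N r (ar r) \<le> N r \<beta>"
    by metis
  have fR: "finite R" unfolding R_def by (intro finite_PiE) auto
  have neR: "R \<noteq> {}" unfolding R_def using k by (auto simp: PiE_eq_empty_iff lessThan_empty_iff)
  define m where "m = Min ((\<lambda>r. N r (ar r)) ` R)"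
  have "m \<in> (\<lambda>r. N r (ar r)) ` R" unfolding m_def using fR neR by (intro Min_in) auto
  then obtain r0 where r0: "r0 \<in> R" "N r0 (ar r0) = m" by auto
  have M0: "minim r0 (ar r0)"
    unfolding minim_def
  proof (intro conjI ballI)
    fix r' \<beta> assume "r' \<in> R" "\<beta> \<in> S"
    have "m \<le> N r' (ar r')" unfolding m_def using fR \<open>r' \<in> R\<close> by (intro Min_le) auto
    also have "\<dots> \<le> N r' \<beta>" using ar(2)[OF \<open>\<beta> \<in> S\<close>] .
    finally show "N r0 (ar r0) \<le> N r' \<beta>" using r0 by simp
  qed (use r0 ar in auto)

  have opt: "(\<Sum>q<D. cb r \<alpha> q * W j (r j) q) \<ge> N r \<alpha>" if M: "minim r \<alpha>" and j: "j < n" for r \<alpha> j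
  proof -
    define P where "P q = cb r \<alpha> q" for q
    define Y where "Y q = W j (r j) q" for q
    define a where "a = (\<Sum>q<D. P q * Y q) - (\<Sum>q<D. (P q)^2)"
    define b where "b = (\<Sum>q<D. (Y q - P q)^2)"
    have "0 \<le> 2*a + t*b" if t: "0 < t" "t \<le> 1" for t
    proof -
      define \<beta> where "\<beta> i = (1-t) * \<alpha> i + t * (if i = j then 1 else 0)" for i
      have aS: "\<alpha> \<in> S" using M by (simp add: minim_def)
      have "(\<Sum>i<n. \<beta> i) = (1-t) * (\<Sum>i<n. \<alpha> i) + t * (\<Sum>i<n. (if i = j then 1 else 0))"
        by (simp only: \<beta>_def sum.distrib sum_distrib_left)
      also have "\<dots> = 1" using aS j by (simp add: S_def)
      finally have sb: "(\<Sum>i<n. \<beta> i) = 1" .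
      have tj: "(\<Sum>i<n. t * (if i = j then 1 else 0)) = t" using j
        by (subst sum_distrib_left[symmetric]) simp
      have "\<beta> \<in> S" using aS t j tj sb by (auto simp: S_def \<beta>_def)
      hence le: "N r \<alpha> \<le> N r \<beta>" using M by (simp add: minim_def)
      have cbb: "cb r \<beta> q = (1-t) * P q + t * Y q" for q
      proof -
        have "cb r \<beta> q = (\<Sum>i<n. (1-t) * (\<alpha> i * W i (r i) q) + t * (if i = j then W i (r i) q else 0))"
          unfolding cb_def \<beta>_def by (intro sum.cong) (auto simp: algebra_simps)
        also have "\<dots> = (1-t) * P q + t * Y q"
          using j by (simp add: sum.distrib sum_distrib_left[symmetric] P_def cb_def Y_def)
        finally show ?thesis .
      qed
      have pw: "((1-t) * P q + t * Y q)^2 = (P q)^2 + 2*t*(P q * Y q - (P q)^2) + t^2 * (Y q - P q)^2" for q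
        by (simp add: power2_eq_square algebra_simps)
      have "N r \<beta> = (\<Sum>q<D. (P q)^2) + 2*t*a + t^2 * b"
        unfolding N_def cbb pw a_def b_def
        by (simp add: sum.distrib sum_distrib_left sum_subtractf algebra_simps)
      moreover have "N r \<alpha> = (\<Sum>q<D. (P q)^2)" by (simp add: N_def P_def)
      ultimately have "0 \<le> 2*t*a + t^2*b" using le by simp
      hence "0 \<le> t * (2*a + t*b)" by (simp add: power2_eq_square algebra_simps)
      thus ?thesis using t by (simp add: zero_le_mult_iff)
    qed
    moreover have "b \<ge> 0" unfolding b_def by (intro sum_nonneg) auto
    ultimately have "a \<ge> 0" by (rule aux_lin)
    thus ?thesis by (simp add: a_def N_def P_def Y_def)
  qed

  have step2: False if M: "minim r \<alpha>" and j0: "j0 < n" "\<alpha> j0 = 0" and Np: "N r \<alpha> > 0" for r \<alpha> j0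
  proof -
    define P where "P q = cb r \<alpha> q" for q
    have ge: "(\<Sum>q<D. P q * W j0 s q) \<ge> N r \<alpha>" if s: "s < k" for s
    proof -
      have rR: "r \<in> R" using M by (simp add: minim_def)
      have r'R: "r(j0 := s) \<in> R" using rR s j0 by (auto simp: R_def PiE_iff extensional_def)
      have cbeq: "cb (r(j0 := s)) \<alpha> q = cb r \<alpha> q" for q
        unfolding cb_def by (rule sum.cong) (use j0 in auto)
      have "minim (r(j0 := s)) \<alpha>"
        using M r'R by (simp add: minim_def N_def cbeq)
      from opt[OF this j0(1)] show ?thesis by (simp add: cbeq P_def N_def)
    qed
    have "(\<Sum>s<k. (\<Sum>q<D. P q * W j0 s q)) = (\<Sum>q<D. P q * (\<Sum>s<k. W j0 s q))"
      by (simp add: sum_distrib_left sum.swap[of _ "{..<k}"])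
    also have "\<dots> = 0" using zero j0 by simp
    finally have "(\<Sum>s<k. (\<Sum>q<D. P q * W j0 s q)) = 0" .
    moreover have "(\<Sum>s<k. (\<Sum>q<D. P q * W j0 s q)) \<ge> (\<Sum>s<k. N r \<alpha>)"
      by (intro sum_mono ge) auto
    moreover have "(\<Sum>s<k. N r \<alpha>) > 0" using k Np by simp
    ultimately show False by linarith
  qed

  show ?thesis
  proof (cases "N r0 (ar r0) = 0")
    case True
    have "\<forall>q<D. (cb r0 (ar r0) q)^2 = 0"
      using True unfolding N_def by (subst (asm) sum_nonneg_eq_0_iff) auto
    then show ?thesis using r0 ar(1)[of r0]
      by (intro exI[of _ r0] exI[of _ "ar r0"]) (auto simp: S_def R_def cb_def PiE_iff)
  next
    case False
    define \<alpha>0 where "\<alpha>0 = ar r0"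
    have Np: "N r0 \<alpha>0 > 0" using False unfolding N_def \<alpha>0_def by (metis sum_nonneg zero_le_power2 order_le_neq_trans)
    have M: "minim r0 \<alpha>0" using M0 by (simp add: \<alpha>0_def)
    have aS: "\<alpha>0 \<in> S" using M by (simp add: minim_def)
    have pos: "\<alpha>0 j > 0" if "j < n" for j
      using step2[OF M that _ Np] aS that by (force simp: S_def)
    define P where "P q = cb r0 \<alpha>0 q" for q
    define y where "y j q = W j (r0 j) q" for j q
    define g where "g j = (\<Sum>q<D. P q * y j q)" for j
    have gge: "g j \<ge> N r0 \<alpha>0" if "j < n" for j
      using opt[OF M that] by (simp add: g_def P_def y_def)
    have "(\<Sum>j<n. \<alpha>0 j * g j) = (\<Sum>q<D. P q * (\<Sum>j<n. \<alpha>0 j * y j q))"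
      by (simp add: g_def sum_distrib_left sum.swap[of _ "{..<n}"] algebra_simps)
    also have "\<dots> = N r0 \<alpha>0" by (simp add: N_def P_def cb_def y_def power2_eq_square)
    finally have sg: "(\<Sum>j<n. \<alpha>0 j * g j) = N r0 \<alpha>0" .
    have "(\<Sum>j<n. \<alpha>0 j * (g j - N r0 \<alpha>0)) = (\<Sum>j<n. \<alpha>0 j * g j) - (\<Sum>j<n. \<alpha>0 j) * N r0 \<alpha>0"
      by (simp add: algebra_simps sum_subtractf sum_distrib_left sum_distrib_right)
    also have "\<dots> = 0" using sg aS by (simp add: S_def)
    finally have s0: "(\<Sum>j<n. \<alpha>0 j * (g j - N r0 \<alpha>0)) = 0" .
    have nn: "\<And>x. x \<in> {..<n} \<Longrightarrow> 0 \<le> \<alpha>0 x * (g x - N r0 \<alpha>0)"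
      using pos gge by (simp add: less_imp_le)
    have "\<forall>j<n. \<alpha>0 j * (g j - N r0 \<alpha>0) = 0"
    proof -
      have "(\<Sum>j<n. \<alpha>0 j * (g j - N r0 \<alpha>0)) = 0 \<longleftrightarrow> (\<forall>x\<in>{..<n}. \<alpha>0 x * (g x - N r0 \<alpha>0) = 0)"
        by (rule sum_nonneg_eq_0_iff) (use nn in auto)
      then show ?thesis using s0 by blast
    qed
    hence geq: "g j = N r0 \<alpha>0" if "j < n" for j using pos[OF that] that by auto
    define v where "v j q = (if j = n then P q else y j q - y 0 q)" for j q
    obtain c where c: "\<exists>j\<in>{1..n}. c j \<noteq> 0" "\<forall>q<D. (\<Sum>j\<in>{1..n}. c j * v j q) = 0"
      using dep_lemma[of "{1..n}" D v] nD by auto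
    have splitJ: "(\<Sum>j\<in>{1..n}. f j) = f n + (\<Sum>j\<in>{1..<n}. f j)" for f :: "nat \<Rightarrow> real"
      using n0 by (metis Suc_le_eq add.commute atLeastLessThanSuc_atLeastAtMost sum.atLeastLessThan_Suc One_nat_def)
    have splitn: "(\<Sum>j<n. f j) = f 0 + (\<Sum>j\<in>{1..<n}. f j)" for f :: "nat \<Rightarrow> real"
      using n0 by (metis One_nat_def atLeast0LessThan sum.atLeast_Suc_lessThan)
    have "0 = (\<Sum>q<D. P q * (\<Sum>j\<in>{1..n}. c j * v j q))" using c(2) by simp
    also have "\<dots> = (\<Sum>j\<in>{1..n}. c j * (\<Sum>q<D. P q * v j q))"
      by (simp only: sum_distrib_left, subst sum.swap, simp add: algebra_simps)
    also have "\<dots> = c n * N r0 \<alpha>0 + (\<Sum>j\<in>{1..<n}. c j * (g j - g 0))"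
      by (subst splitJ) (simp add: v_def g_def N_def P_def power2_eq_square sum_subtractf algebra_simps)
    also have "(\<Sum>j\<in>{1..<n}. c j * (g j - g 0)) = 0"
      using geq n0 by (intro sum.neutral) auto
    finally have cn: "c n = 0" using Np by simp
    define \<mu> where "\<mu> j = (if j = 0 then - (\<Sum>i\<in>{1..<n}. c i) else if j < n then c j else 0)" for j
    have smu: "(\<Sum>j<n. \<mu> j) = 0"
      by (subst splitn) (simp add: \<mu>_def)
    have ymu: "(\<Sum>j<n. \<mu> j * y j q) = 0" if "q < D" for q
    proof -
      have "(\<Sum>j<n. \<mu> j * y j q) = \<mu> 0 * y 0 q + (\<Sum>j\<in>{1..<n}. c j * y j q)"
        by (subst splitn) (simp add: \<mu>_def)
      also have "\<dots> = (\<Sum>j\<in>{1..n}. c j * v j q)"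
      proof -
        have e1: "(\<Sum>j\<in>{Suc 0..<n}. c j * y 0 q) = (\<Sum>j\<in>{Suc 0..<n}. c j) * y 0 q"
          by (simp add: sum_distrib_right)
        have e2: "(\<Sum>j\<in>{Suc 0..<n}. c j * v j q) = (\<Sum>j\<in>{Suc 0..<n}. c j * y j q) - (\<Sum>j\<in>{Suc 0..<n}. c j * y 0 q)"
          by (simp add: v_def right_diff_distrib sum_subtractf)
        show ?thesis by (subst splitJ) (simp add: cn e1 e2 \<mu>_def)
      qed
      also have "\<dots> = 0" using c(2) that by simp
      finally show ?thesis .
    qed
    obtain j2 where j2: "j2 < n" "\<mu> j2 \<noteq> 0"
    proof -
      obtain j where "j \<in> {1..n}" "c j \<noteq> 0" using c(1) by auto
      with cn have "1 \<le> j" "j < n" "c j \<noteq> 0" by (auto simp: le_less)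
      then show ?thesis using that[of j] by (simp add: \<mu>_def)
    qed
    have "\<exists>j<n. \<mu> j > 0"
    proof (rule ccontr)
      assume "\<not> ?thesis"
      hence "\<forall>j<n. \<mu> j \<le> 0" by auto
      hence nn: "\<And>j. j \<in> {..<n} \<Longrightarrow> 0 \<le> - \<mu> j" by auto
      have "(\<Sum>j<n. - \<mu> j) = 0" using smu by (simp add: sum_negf)
      moreover have "(\<Sum>j<n. - \<mu> j) = 0 \<longleftrightarrow> (\<forall>j\<in>{..<n}. - \<mu> j = 0)"
        by (rule sum_nonneg_eq_0_iff) (use nn in auto)
      ultimately have "\<forall>j\<in>{..<n}. \<mu> j = 0" by auto
      thus False using j2 by auto
    qed
    define Pos where "Pos = {j. j < n \<and> \<mu> j > 0}"
    have fPos: "finite Pos" "Pos \<noteq> {}" using \<open>\<exists>j<n. \<mu> j > 0\<close> by (auto simp: Pos_def)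
    define tt where "tt = Min ((\<lambda>j. \<alpha>0 j / \<mu> j) ` Pos)"
    have "tt \<in> (\<lambda>j. \<alpha>0 j / \<mu> j) ` Pos" unfolding tt_def using fPos by (intro Min_in) auto
    then obtain j1 where j1: "j1 \<in> Pos" "tt = \<alpha>0 j1 / \<mu> j1" by auto
    have ttle: "tt \<le> \<alpha>0 j / \<mu> j" if "j \<in> Pos" for j
      unfolding tt_def using fPos that by (intro Min_le) auto
    have tt0: "tt \<ge> 0" using j1 pos by (auto simp: Pos_def intro!: divide_nonneg_pos less_imp_le)
    define \<alpha>' where "\<alpha>' j = \<alpha>0 j - tt * \<mu> j" for j
    have a'S: "\<alpha>' \<in> S"
    proof -
      have "0 \<le> \<alpha>' j" if "j < n" for j
      proof (cases "\<mu> j > 0")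
        case True
        hence "tt \<le> \<alpha>0 j / \<mu> j" using ttle that by (simp add: Pos_def)
        hence "tt * \<mu> j \<le> \<alpha>0 j" using True by (simp add: field_simps)
        thus ?thesis by (simp add: \<alpha>'_def)
      next
        case False
        hence "tt * \<mu> j \<le> 0" using tt0 by (simp add: mult_nonneg_nonpos)
        thus ?thesis using pos[OF that] by (simp add: \<alpha>'_def)
      qed
      moreover have "\<alpha>' j = 0" if "j \<ge> n" for j
        using aS that by (simp add: \<alpha>'_def \<mu>_def S_def)
      moreover have "(\<Sum>j<n. \<alpha>' j) = 1"
        using aS smu by (simp add: \<alpha>'_def sum_subtractf S_def sum_distrib_left[symmetric])
      ultimately show ?thesis by (simp add: S_def)
    qed
    have cbeq: "cb r0 \<alpha>' q = cb r0 \<alpha>0 q" if "q < D" for q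
    proof -
      have "cb r0 \<alpha>' q = cb r0 \<alpha>0 q - tt * (\<Sum>j<n. \<mu> j * y j q)"
        by (simp add: cb_def \<alpha>'_def y_def algebra_simps sum_subtractf sum_distrib_left)
      thus ?thesis using ymu[OF that] by simp
    qed
    have "N r0 \<alpha>' = N r0 \<alpha>0" unfolding N_def by (rule sum.cong) (auto simp: cbeq)
    hence M': "minim r0 \<alpha>'" using M a'S by (simp add: minim_def)
    have "\<alpha>' j1 = 0" using j1 by (simp add: \<alpha>'_def Pos_def)
    moreover have "j1 < n" using j1 by (simp add: Pos_def)
    ultimately have False using step2[OF M'] Np \<open>N r0 \<alpha>' = N r0 \<alpha>0\<close> by simp
    then show ?thesis ..
  qed
qed



lemma shift_bij:
  assumes "(k::nat) > 0"
  shows "bij_betw (\<lambda>s. (b + s) mod k) {..<k} {..<k}"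
proof -
  have key: "((b + s) mod k + (k - b mod k)) mod k = s" if "s < k" for s
  proof -
    have bm: "b mod k < k" using assms by simp
    have "((b + s) mod k + (k - b mod k)) mod k = (b + s + (k - b mod k)) mod k"
      by (simp add: mod_add_left_eq)
    also have "b + s + (k - b mod k) = s + (b div k + 1) * k"
    proof -
      have e: "b = b div k * k + b mod k" by simp
      have f: "(b div k + 1) * k = b div k * k + k" by simp
      show ?thesis using e f bm by linarith
    qed
    also have "(s + (b div k + 1) * k) mod k = s" using that by (simp only: mod_mult_self1 mod_less)
    finally show ?thesis .
  qed
  have inj: "inj_on (\<lambda>s. (b + s) mod k) {..<k}"
  proof (rule inj_onI)
    fix s s' assume "s \<in> {..<k}" "s' \<in> {..<k}" "(b + s) mod k = (b + s') mod k"
    then show "s = s'" using key by (metis lessThan_iff)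
  qed
  have sub: "(\<lambda>s. (b + s) mod k) ` {..<k} \<subseteq> {..<k}" using assms by auto
  have "(\<lambda>s. (b + s) mod k) ` {..<k} = {..<k}"
    by (rule endo_inj_surj[OF _ sub inj]) simp
  then show ?thesis using inj by (simp add: bij_betw_def)
qed



lemma part1:
  fixes F :: "nat \<Rightarrow> (real ^ 'd::finite) set"
  assumes k: "k \<ge> 1" and nD: "n = (k - 1) * CARD('d) + 1"
    and F: "\<forall>j<n. finite (F j) \<and> card (F j) = k"
  shows "\<exists>x. colourful_partition F n k x \<and> intersect_equal_coeffs n k x"
proof -
  define d where "d = CARD('d)"
  define D where "D = (k - 1) * d"
  have k0: "k > 0" using k by simp
  have "\<forall>j. \<exists>h. j < n \<longrightarrow> bij_betw h {0..<k} (F j)"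
    using F ex_bij_betw_nat_finite by metis
  then obtain e where e: "\<And>j. j < n \<Longrightarrow> bij_betw (e j) {0..<k} (F j)" by metis
  obtain g where g: "bij_betw g {0..<d} (UNIV::'d set)"
    using ex_bij_betw_nat_finite[of "UNIV::'d set"] d_def by auto
  define h where "h = inv_into {0..<d} g"
  have gh: "g (h c) = c" for c
    unfolding h_def using g by (simp add: bij_betw_inv_into_right)
  have hlt: "h c < d" for c
    unfolding h_def using g by (metis atLeastLessThan_iff bij_betw_def inv_into_into UNIV_I)
  define m where "m j = (1 / real k) *\<^sub>R (\<Sum>i<k. e j i)" for j
  define z where "z j i = e j i - m j" for j i
  have zsum: "(\<Sum>i<k. z j i) = 0" for j
  proof -
    have "(\<Sum>i<k. z j i) = (\<Sum>i<k. e j i) - real k *\<^sub>R m j"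
      by (simp add: z_def sum_subtractf sum_constant_scaleR del: sum_constant)
    also have "real k *\<^sub>R m j = (\<Sum>i<k. e j i)" using k0 by (simp add: m_def)
    finally show ?thesis by simp
  qed
  have zshift: "(\<Sum>i<k. z j ((b + i) mod k)) = 0" for j b
  proof -
    have "(\<Sum>i<k. z j ((b + i) mod k)) = (\<Sum>i<k. z j i)"
      using sum.reindex_bij_betw[OF shift_bij[OF k0, of b], of "z j"] by simp
    then show ?thesis using zsum by simp
  qed
  define W where "W j s q = z j ((q div d + s) mod k) $ g (q mod d)" for j s q
  have Wz: "(\<Sum>s<k. W j s q) = 0" if "j < n" "q < D" for j q
  proof -
    have "(\<Sum>s<k. W j s q) = (\<Sum>s<k. z j ((q div d + s) mod k)) $ g (q mod d)"
      by (simp add: W_def sum_component)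
    then show ?thesis using zshift by simp
  qed
  obtain r \<alpha> where r: "\<forall>j<n. r j < k" and a0: "\<forall>j<n. \<alpha> j \<ge> 0" and a1: "(\<Sum>j<n. \<alpha> j) = 1"
    and aW: "\<forall>q<D. (\<Sum>j<n. \<alpha> j * W j (r j) q) = 0"
    using colourful_cara[of k n D W] k nD Wz by (auto simp: D_def d_def)
  define x where "x i j = e j ((i + r j) mod k)" for i j
  have cp: "colourful_partition F n k x"
    unfolding colourful_partition_def
  proof (intro conjI allI impI)
    fix i j assume "i < k" "j < n"
    then show "x i j \<in> F j" unfolding x_def using e[of j] k0
      by (meson atLeastLessThan_iff bij_betw_apply mod_less_divisor zero_le)
  next
    fix j assume j: "j < n"
    have "inj_on (\<lambda>i. (r j + i) mod k) {..<k}" using shift_bij[OF k0] bij_betw_def by blast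
    moreover have "inj_on (e j) {..<k}" using e[OF j] by (simp add: bij_betw_def lessThan_atLeast0)
    moreover have "(\<lambda>i. (r j + i) mod k) ` {..<k} \<subseteq> {..<k}" using k0 by auto
    ultimately have "inj_on (e j \<circ> (\<lambda>i. (r j + i) mod k)) {..<k}"
      by (rule comp_inj_on[OF _ inj_on_subset])
    then show "inj_on (\<lambda>i. x i j) {..<k}" by (simp add: x_def o_def add.commute)
  qed
  define M where "M = (\<Sum>j<n. \<alpha> j *\<^sub>R m j)"
  define Z where "Z i = (\<Sum>j<n. \<alpha> j *\<^sub>R z j ((i + r j) mod k))" for i
  have xZ: "(\<Sum>j<n. \<alpha> j *\<^sub>R x i j) = Z i + M" for i
    by (simp add: x_def Z_def M_def z_def scaleR_diff_right sum_subtractf)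
  have Z0: "Z i = 0" if "i < k - 1" for i
  proof (rule vec_eq_iff[THEN iffD2], rule allI)
    fix c
    define q where "q = i * d + h c"
    have qD: "q < D"
    proof -
      have "q < i * d + d" using hlt[of c] by (simp add: q_def)
      also have "i * d + d = (i + 1) * d" by simp
      also have "\<dots> \<le> (k - 1) * d" using that by (intro mult_right_mono) auto
      finally show ?thesis by (simp add: D_def)
    qed
    have d0: "d > 0" using hlt[of c] by simp
    have qdiv: "q div d = i" and qmod: "q mod d = h c"
      using hlt[of c] d0 by (simp_all add: q_def)
    have "Z i $ c = (\<Sum>j<n. \<alpha> j * W j (r j) q)"
      by (simp add: Z_def W_def qdiv qmod gh sum_component)
    also have "\<dots> = 0" using aW qD by simp
    finally show "Z i $ c = 0 $ c" by simp
  qed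
  have Zsum: "(\<Sum>i<k. Z i) = 0"
  proof -
    have "(\<Sum>i<k. Z i) = (\<Sum>j<n. \<alpha> j *\<^sub>R (\<Sum>i<k. z j ((r j + i) mod k)))"
      unfolding Z_def by (simp add: scaleR_sum_right sum.swap[of _ "{..<k}"] add.commute)
    also have "\<dots> = 0" using zshift by simp
    finally show ?thesis .
  qed
  have Zall: "Z i = 0" if "i < k" for i
  proof (cases "i < k - 1")
    case True then show ?thesis using Z0 by simp
  next
    case False
    hence ik: "i = k - 1" using that by simp
    have "{..<k} = insert (k - 1) {..<k - 1}" using k0 by auto
    hence "(\<Sum>i<k. Z i) = Z (k - 1) + (\<Sum>i<k - 1. Z i)" by simp
    also have "(\<Sum>i<k - 1. Z i) = 0" using Z0 by simp
    finally show ?thesis using Zsum ik by simp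
  qed
  have "intersect_equal_coeffs n k x"
    unfolding intersect_equal_coeffs_def
    using a0 a1 by (intro exI[of _ \<alpha>]) (simp add: xZ Zall)
  with cp show ?thesis by blast
qed



lemma card_mod_class:
  assumes "n \<le> K * d" "d > 0"
  shows "card {j. j < n \<and> j mod d = a} \<le> K"
proof -
  have inj: "inj_on (\<lambda>j. j div d) {j. j < n \<and> j mod d = a}"
  proof (rule inj_onI)
    fix x y assume "x \<in> {j. j < n \<and> j mod d = a}" "y \<in> {j. j < n \<and> j mod d = a}" "x div d = y div d"
    then have "x mod d = y mod d" "x div d = y div d" by auto
    moreover have "x = x div d * d + x mod d" "y = y div d * d + y mod d" by simp_all
    ultimately show "x = y" by simp
  qed
  have sub: "(\<lambda>j. j div d) ` {j. j < n \<and> j mod d = a} \<subseteq> {..<K}"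
  proof
    fix y assume "y \<in> (\<lambda>j. j div d) ` {j. j < n \<and> j mod d = a}"
    then obtain j where j: "j < n" "y = j div d" by auto
    have "j < K * d" using j assms by linarith
    then show "y \<in> {..<K}" using j assms by (simp add: div_less_iff_less_mult)
  qed
  have "card {j. j < n \<and> j mod d = a} = card ((\<lambda>j. j div d) ` {j. j < n \<and> j mod d = a})"
    using inj by (simp add: card_image)
  also have "\<dots> \<le> card {..<K}" by (rule card_mono[OF _ sub]) simp
  finally show ?thesis by simp
qed

lemma ex_argmax:
  fixes f :: "nat \<Rightarrow> nat"
  assumes "k > 0"
  shows "\<exists>i<k. \<forall>i'<k. f i' \<le> f i"
proof -
  have "Max (f ` {..<k}) \<in> f ` {..<k}" using assms by (intro Max_in) auto
  then obtain i where i: "i < k" "Max (f ` {..<k}) = f i" by auto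
  have "f i' \<le> f i" if "i' < k" for i'
  proof -
    have "f i' \<le> Max (f ` {..<k})" by (rule Max_ge) (use that in auto)
    then show ?thesis using i by simp
  qed
  then show ?thesis using i by auto
qed

lemma key_pos:
  fixes s :: "nat \<Rightarrow> real" and T :: "nat set" and B :: real
  assumes T: "T \<subseteq> {..<k}" "card T < k" and B: "B > real (card T)" "B > 0"
    and top: "it \<in> T" "s it = B ^ E"
    and spos: "\<And>i. i < k \<Longrightarrow> s i \<ge> 0"
    and rest: "\<And>i. i < k \<Longrightarrow> i \<notin> T \<Longrightarrow> B * s i \<le> B ^ E"
  shows "0 < (\<Sum>i<k. (if i \<in> T then real k - real (card T) else - real (card T)) * s i)"
proof -
  define u where "u = real k - real (card T)"
  define c where "c = real (card T)"
  have u1: "u \<ge> 1" using T(2) by (simp add: u_def)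
  have fT: "finite T" by (rule finite_subset[OF T(1)]) simp
  have cardR: "card ({..<k} - T) = k - card T" using T(1) fT by (simp add: card_Diff_subset)
  have split: "(\<Sum>i<k. (if i \<in> T then u else - c) * s i) = u * (\<Sum>i\<in>T. s i) - c * (\<Sum>i\<in>{..<k} - T. s i)"
  proof -
    have "(\<Sum>i<k. (if i \<in> T then u else - c) * s i)
        = (\<Sum>i\<in>{..<k} - T. (if i \<in> T then u else - c) * s i) + (\<Sum>i\<in>T. (if i \<in> T then u else - c) * s i)"
      by (rule sum.subset_diff[OF T(1)]) simp
    also have "(\<Sum>i\<in>{..<k} - T. (if i \<in> T then u else - c) * s i) = - c * (\<Sum>i\<in>{..<k} - T. s i)"
      by (simp add: sum_distrib_left)
    also have "(\<Sum>i\<in>T. (if i \<in> T then u else - c) * s i) = u * (\<Sum>i\<in>T. s i)"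
      by (simp add: sum_distrib_left)
    finally show ?thesis by simp
  qed
  have A: "(\<Sum>i\<in>T. s i) \<ge> B ^ E"
  proof -
    have "s it \<le> (\<Sum>i\<in>T. s i)"
      by (rule member_le_sum) (use top fT spos T(1) in auto)
    then show ?thesis using top by simp
  qed
  have R: "B * (\<Sum>i\<in>{..<k} - T. s i) \<le> u * B ^ E"
  proof -
    have "B * (\<Sum>i\<in>{..<k} - T. s i) = (\<Sum>i\<in>{..<k} - T. B * s i)" by (simp add: sum_distrib_left)
    also have "\<dots> \<le> (\<Sum>i\<in>{..<k} - T. B ^ E)" by (intro sum_mono rest) auto
    also have "\<dots> = u * B ^ E" using cardR T(2) by (simp add: u_def of_nat_diff)
    finally show ?thesis .
  qed
  have BE: "B ^ E > 0" using B by simp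
  have c0: "c \<ge> 0" by (simp add: c_def)
  have Rn: "(\<Sum>i\<in>{..<k} - T. s i) \<ge> 0" by (intro sum_nonneg) (use spos in auto)
  have "c * (B * (\<Sum>i\<in>{..<k} - T. s i)) \<le> c * (u * B ^ E)"
    using R c0 by (rule mult_left_mono)
  hence "B * (c * (\<Sum>i\<in>{..<k} - T. s i)) \<le> c * (u * B ^ E)"
    by (simp only: mult.left_commute)
  also have "\<dots> < B * (u * B ^ E)"
  proof (rule mult_strict_right_mono)
    show "c < B" using B(1) by (simp add: c_def)
    show "0 < u * B ^ E" using u1 BE by (intro mult_pos_pos) auto
  qed
  finally have "B * (c * (\<Sum>i\<in>{..<k} - T. s i)) < B * (u * B ^ E)" .
  hence "c * (\<Sum>i\<in>{..<k} - T. s i) < u * B ^ E"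
    using B(2) by (rule mult_less_cancel_left_pos[THEN iffD1, rotated])
  also have "u * B ^ E \<le> u * (\<Sum>i\<in>T. s i)" using A u1 by simp
  finally have "0 < (\<Sum>i<k. (if i \<in> T then u else - c) * s i)" using split by linarith
  moreover have "(\<Sum>i<k. (if i \<in> T then u else - c) * s i) = (\<Sum>i<k. (if i \<in> T then real k - real (card T) else - real (card T)) * s i)"
    by (simp only: u_def c_def)
  ultimately show ?thesis by (simp only:)
qed



lemma part2:
  fixes k n t :: nat
  assumes k: "k \<ge> 1" and n: "n \<ge> 1" and tk: "t \<ge> k" and nlt: "n < (k - 1) * CARD('d) + 1"
  shows "\<exists>F :: nat \<Rightarrow> (real ^ 'd::finite) set. (\<forall>j<n. finite (F j) \<and> card (F j) = t) \<and>
           \<not> (\<exists>x. colourful_partition F n k x \<and> intersect_equal_coeffs n k x)"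
proof -
  define d where "d = CARD('d)"
  have d0: "d > 0" by (simp add: d_def)
  have nle: "n \<le> (k - 1) * d" using nlt by (simp add: d_def)
  have k2: "k \<ge> 2"
  proof (rule ccontr)
    assume "\<not> k \<ge> 2"
    hence "k - 1 = 0" using k by simp
    thus False using nle n by simp
  qed
  obtain g where g: "bij_betw g {0..<d} (UNIV::'d set)"
    using ex_bij_betw_nat_finite[of "UNIV::'d set"] d_def by auto
  define ax where "ax j = g (j mod d)" for j
  define B :: real where "B = real k + 1"
  have B1: "B > 1" using k by (simp add: B_def)
  define pt :: "nat \<Rightarrow> nat \<Rightarrow> real ^ 'd" where "pt j e = (\<chi> c. if c = ax j then B ^ e else 0)" for j e
  have ptc: "pt j e $ c = (if c = ax j then B ^ e else 0)" for j e c
    by (simp add: pt_def)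
  define F where "F j = pt j ` {..<t}" for j
  have injpt: "inj_on (pt j) {..<t}" for j
  proof (rule inj_onI)
    fix e e' assume "pt j e = pt j e'"
    hence "pt j e $ ax j = pt j e' $ ax j" by simp
    hence "B ^ e = B ^ e'" by (simp add: ptc)
    thus "e = e'" using B1 by (simp add: power_inject_exp)
  qed
  have Fok: "\<forall>j<n. finite (F j) \<and> card (F j) = t"
    using injpt by (simp add: F_def card_image)
  have notex: "\<not> (\<exists>x. colourful_partition F n k x \<and> intersect_equal_coeffs n k x)"
  proof
    assume "\<exists>x. colourful_partition F n k x \<and> intersect_equal_coeffs n k x"
    then obtain x where x1: "colourful_partition F n k x" and x2: "intersect_equal_coeffs n k x"
      by blast
    from x1 have xF: "\<forall>i<k. \<forall>j<n. x i j \<in> F j"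
      and xinj: "\<forall>j<n. inj_on (\<lambda>i. x i j) {..<k}"
      unfolding colourful_partition_def by simp_all
    from x2 obtain \<alpha> where a0: "\<forall>j<n. \<alpha> j \<ge> 0" and a1: "(\<Sum>j<n. \<alpha> j) = 1"
      and eq: "\<forall>i<k. \<forall>i'<k. (\<Sum>j<n. \<alpha> j *\<^sub>R x i j) = (\<Sum>j<n. \<alpha> j *\<^sub>R x i' j)"
      unfolding intersect_equal_coeffs_def by blast
    define ex where "ex i j = (SOME e. e < t \<and> x i j = pt j e)" for i j
    have ex: "ex i j < t \<and> x i j = pt j (ex i j)" if "i < k" "j < n" for i j
    proof -
      have "\<exists>e. e < t \<and> x i j = pt j e" using xF that by (auto simp: F_def)
      then show ?thesis unfolding ex_def by (rule someI_ex)
    qed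
    have exinj: "i = i'" if "i < k" "i' < k" "j < n" "ex i j = ex i' j" for i i' j
    proof -
      have "x i j = x i' j" using ex[of i j] ex[of i' j] that by simp
      thus ?thesis using xinj that by (meson inj_onD lessThan_iff)
    qed
    have "\<exists>j<n. \<alpha> j > 0"
    proof (rule ccontr)
      assume "\<not> (\<exists>j<n. \<alpha> j > 0)"
      hence "\<forall>j<n. \<alpha> j \<le> 0" using leI by blast
      hence "(\<Sum>j<n. \<alpha> j) \<le> 0" by (intro sum_nonpos) auto
      thus False using a1 by simp
    qed
    then obtain j0 where j0: "j0 < n" "\<alpha> j0 > 0" by blast
    define c0 where "c0 = ax j0"
    define J where "J = {j \<in> {..<n}. ax j = c0}"
    have j0J: "j0 \<in> J" using j0 by (simp add: J_def c0_def)
    have fJ: "finite J" by (simp add: J_def)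
    have cardJ: "card J \<le> k - 1"
    proof -
      have "J \<subseteq> {j. j < n \<and> j mod d = j0 mod d}"
      proof
        fix j assume "j \<in> J"
        hence jn: "j < n" and "g (j mod d) = g (j0 mod d)" by (auto simp: J_def c0_def ax_def)
        moreover have "j mod d \<in> {0..<d}" "j0 mod d \<in> {0..<d}" using d0 by auto
        ultimately have "j mod d = j0 mod d" using g by (meson bij_betw_def inj_onD)
        thus "j \<in> {j. j < n \<and> j mod d = j0 mod d}" using jn by simp
      qed
      hence "card J \<le> card {j. j < n \<and> j mod d = j0 mod d}" by (intro card_mono) auto
      also have "\<dots> \<le> k - 1" using card_mod_class[OF nle d0] .
      finally show ?thesis .
    qed
    define top where "top j = (SOME i. i < k \<and> (\<forall>i'<k. ex i' j \<le> ex i j))" for j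
    have top: "top j < k \<and> (\<forall>i'<k. ex i' j \<le> ex (top j) j)" for j
    proof -
      have "\<exists>i<k. \<forall>i'<k. ex i' j \<le> ex i j" using ex_argmax[of k "\<lambda>i. ex i j"] k by simp
      then show ?thesis unfolding top_def by (rule someI_ex)
    qed
    define T where "T = top ` J"
    have TS: "T \<subseteq> {..<k}" using top by (auto simp: T_def)
    have cardT: "card T < k"
    proof -
      have "card T \<le> card J" unfolding T_def by (rule card_image_le[OF fJ])
      thus ?thesis using cardJ k by linarith
    qed
    define w where "w i = (if i \<in> T then real k - real (card T) else - real (card T))" for i
    have pos: "0 < (\<Sum>i<k. w i * B ^ ex i j)" if jJ: "j \<in> J" for j
    proof -
      have jn: "j < n" using jJ by (simp add: J_def)
      show ?thesis unfolding w_def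
      proof (rule key_pos[OF TS cardT _ _ _ refl])
        show "real (card T) < B" using cardT by (simp add: B_def)
        show "0 < B" using B1 by simp
        show "top j \<in> T" using jJ by (simp add: T_def)
        show "0 \<le> B ^ ex i j" for i using B1 by simp
        show "B * B ^ ex i j \<le> B ^ ex (top j) j" if "i < k" "i \<notin> T" for i
        proof -
          have "i \<noteq> top j" using that jJ by (auto simp: T_def)
          hence "ex i j \<noteq> ex (top j) j" using exinj[of i "top j" j] that top[of j] jn by auto
          moreover have "ex i j \<le> ex (top j) j" using top[of j] that by auto
          ultimately have "Suc (ex i j) \<le> ex (top j) j" by simp
          hence "B ^ Suc (ex i j) \<le> B ^ ex (top j) j" using B1 by (intro power_increasing) auto
          thus ?thesis by simp
        qed
      qed
    qed
    define f where "f i = (\<Sum>j\<in>J. \<alpha> j * B ^ ex i j)" for i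
    have fcoord: "(\<Sum>j<n. \<alpha> j *\<^sub>R x i j) $ c0 = f i" if "i < k" for i
    proof -
      have "(\<Sum>j<n. \<alpha> j *\<^sub>R x i j) $ c0 = (\<Sum>j<n. \<alpha> j * (x i j $ c0))"
        by (simp add: sum_component)
      also have "\<dots> = (\<Sum>j<n. if ax j = c0 then \<alpha> j * B ^ ex i j else 0)"
        by (rule sum.cong) (use ex that in \<open>auto simp: ptc\<close>)
      also have "\<dots> = f i"
        unfolding f_def J_def by (rule sum.inter_filter[symmetric]) simp
      finally show ?thesis .
    qed
    have fconst: "f i = f 0" if "i < k" for i
    proof -
      have k0: "0 < k" using k by simp
      have "(\<Sum>j<n. \<alpha> j *\<^sub>R x i j) = (\<Sum>j<n. \<alpha> j *\<^sub>R x 0 j)" using eq that k0 by blast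
      hence "(\<Sum>j<n. \<alpha> j *\<^sub>R x i j) $ c0 = (\<Sum>j<n. \<alpha> j *\<^sub>R x 0 j) $ c0" by simp
      thus ?thesis using fcoord[OF that] fcoord[OF k0] by simp
    qed
    have wsum: "(\<Sum>i<k. w i) = 0"
    proof -
      have fT: "finite T" by (rule finite_subset[OF TS]) simp
      have s0: "(\<Sum>i<k. w i) = (\<Sum>i\<in>{..<k} - T. w i) + (\<Sum>i\<in>T. w i)"
        by (rule sum.subset_diff[OF TS]) simp
      have s1: "(\<Sum>i\<in>{..<k} - T. w i) = (\<Sum>i\<in>{..<k} - T. - real (card T))"
        by (rule sum.cong) (auto simp: w_def)
      have s2: "(\<Sum>i\<in>T. w i) = (\<Sum>i\<in>T. real k - real (card T))"
        by (rule sum.cong) (auto simp: w_def)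
      have s3: "card ({..<k} - T) = k - card T" using TS fT by (simp add: card_Diff_subset)
      have s4: "card T \<le> k" using cardT by simp
      have s5: "real (card ({..<k} - T)) = real k - real (card T)"
        using s3 s4 by (simp add: of_nat_diff)
      have "(\<Sum>i<k. w i) = - real (card T) * real (card ({..<k} - T)) + (real k - real (card T)) * real (card T)"
        using s0 s1 s2 by simp
      also have "\<dots> = 0" unfolding s5 by (simp add: algebra_simps)
      finally show ?thesis .
    qed
    have "(\<Sum>i<k. w i * f i) = (\<Sum>i<k. w i * f 0)"
    proof (rule sum.cong[OF refl])
      fix i assume "i \<in> {..<k}"
      then show "w i * f i = w i * f 0" using fconst[of i] by simp
    qed
    also have "\<dots> = (\<Sum>i<k. w i) * f 0" by (rule sum_distrib_right[symmetric])
    also have "\<dots> = 0" using wsum by simp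
    finally have z: "(\<Sum>i<k. w i * f i) = 0" .
    have "(\<Sum>i<k. w i * f i) = (\<Sum>j\<in>J. \<alpha> j * (\<Sum>i<k. w i * B ^ ex i j))"
      unfolding f_def sum_distrib_left by (subst sum.swap) (simp add: mult_ac)
    also have "\<dots> \<ge> \<alpha> j0 * (\<Sum>i<k. w i * B ^ ex i j0)"
    proof (rule member_le_sum[OF j0J _ fJ])
      fix j assume "j \<in> J - {j0}"
      hence "j \<in> J" by simp
      moreover hence "j < n" by (simp add: J_def)
      ultimately show "0 \<le> \<alpha> j * (\<Sum>i<k. w i * B ^ ex i j)"
        using pos a0 by (simp add: less_imp_le)
    qed
    moreover have "\<alpha> j0 * (\<Sum>i<k. w i * B ^ ex i j0) > 0"
      using j0 pos[OF j0J] by simp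
    ultimately show False using z by linarith
  qed
  show ?thesis using Fok notex by blast
qed


theorem theorem1:
  fixes k n t :: nat
  assumes "k \<ge> 1" and "n \<ge> 1" and "t \<ge> k"
  shows "(n = (k - 1) * CARD('d) + 1 \<longrightarrow> t = k \<longrightarrow>
            (\<forall>F :: nat \<Rightarrow> (real ^ 'd::finite) set.
               (\<forall>j<n. finite (F j) \<and> card (F j) = t) \<longrightarrow>
               (\<exists>x. colourful_partition F n k x \<and> intersect_equal_coeffs n k x)))
       \<and> (n < (k - 1) * CARD('d) + 1 \<longrightarrow>
            (\<exists>F :: nat \<Rightarrow> (real ^ 'd) set.
               (\<forall>j<n. finite (F j) \<and> card (F j) = t) \<and>
               \<not> (\<exists>x. colourful_partition F n k x \<and> intersect_equal_coeffs n k x)))"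
proof (intro conjI impI allI)
  fix F :: "nat \<Rightarrow> (real ^ 'd) set"
  assume nD: "n = (k - 1) * CARD('d) + 1" and tk: "t = k" and F: "\<forall>j<n. finite (F j) \<and> card (F j) = t"
  show "\<exists>x. colourful_partition F n k x \<and> intersect_equal_coeffs n k x"
    using part1[of k n F] assms(1) nD F tk by blast
next
  assume "n < (k - 1) * CARD('d) + 1"
  then show "\<exists>F :: nat \<Rightarrow> (real ^ 'd) set.
               (\<forall>j<n. finite (F j) \<and> card (F j) = t) \<and>
               \<not> (\<exists>x. colourful_partition F n k x \<and> intersect_equal_coeffs n k x)"
    using part2[of k n t] assms by blast
qed

end
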